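(* Let $\mathcal{A}=\{H_1,\dots,H_m\}$ be an arrangement of hyperplanes in $\mathbb{P}^n$ and let $P_1,\dots,P_m\in\mathrm{End}(\mathbb{C}^r)$ satisfy $\sum_{j=1}^m P_j=0$ and $[P_j,P_X]=0$ for all $j$ and all edges $X$ with $\operatorname{codim}X=2$ and $X\subseteq H_j$, where $P_X=\sum_{X\subseteq H_j}P_j$. Suppose there is $H\in\mathcal{A}$ such that for every dense edge $X\subseteq H$, no eigenvalue of $P_X$ lies in $\mathbb{Z}$. Then there exist integers $k_1,\dots,k_m$ with $\sum_j k_j=0$ such that the collection $(P_1+k_1\mathbb{I}_r,\dots,P_m+k_m\mathbb{I}_r)$ has the property that for every dense edge $X$ of $\mathcal{A}$, no eigenvalue of $\sum_{X\subseteq H_j}(P_j+k_j\mathbb{I}_r)$ lies in $\mathbb{Z}_{\geq 0}$.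
   Context: $\mathbb{I}_r$ is the $r\times r$ identity matrix. An edge is a nonempty intersection of hyperplanes of $\mathcal{A}$; an edge $X$ is dense if the subarrangement of hyperplanes containing $X$ is irreducible, i.e. cannot be partitioned into two nonempty sets which, after a linear change of coordinates, are defined by linear forms in disjoint sets of coordinates (each hyperplane is a dense edge). *)

theory Defs
  imports "HOL-Analysis.Analysis"
begin

text \<open>Projective space P^n is modelled through its cone C^(n+1) = complex^'n
  (so n = CARD('n) - 1). Projective linear subsets
  correspond to linear subspaces of C^(n+1); a projective subset is nonempty
  iff its cone is not {0}; projective codimension = CARD('n) - (linear dim).\<close>

definition lform :: "complex^'n \<Rightarrow> complex^'n \<Rightarrow> complex" where
  "lform a v = (\<Sum>i\<in>UNIV. a $ i * v $ i)"

definition hyp :: "complex^'n \<Rightarrow> (complex^'n) set" where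
  "hyp a = {v. lform a v = 0}"

definition arrangement :: "nat \<Rightarrow> (nat \<Rightarrow> complex^'n) \<Rightarrow> bool" where
  "arrangement m alpha \<longleftrightarrow>
     (\<forall>j<m. alpha j \<noteq> 0) \<and>
     (\<forall>i<m. \<forall>j<m. i \<noteq> j \<longrightarrow> hyp (alpha i) \<noteq> hyp (alpha j))"

definition is_edge :: "nat \<Rightarrow> (nat \<Rightarrow> complex^'n) \<Rightarrow> (complex^'n) set \<Rightarrow> bool" where
  "is_edge m alpha X \<longleftrightarrow>
     (\<exists>S. S \<subseteq> {..<m} \<and> S \<noteq> {} \<and> X = (\<Inter>j\<in>S. hyp (alpha j))) \<and> X \<noteq> {0}"

definition codim :: "(complex^'n) set \<Rightarrow> nat" where
  "codim X = CARD('n) - vec.dim X"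

definition reducible :: "(nat \<Rightarrow> complex^'n) \<Rightarrow> nat set \<Rightarrow> bool" where
  "reducible alpha S \<longleftrightarrow>
     (\<exists>B C. B \<union> C = S \<and> B \<inter> C = {} \<and> B \<noteq> {} \<and> C \<noteq> {} \<and>
        (\<exists>(M :: complex^'n^'n) (I :: 'n set). invertible M \<and>
           (\<forall>j\<in>B. \<forall>i. i \<notin> I \<longrightarrow> (transpose M *v alpha j) $ i = 0) \<and>
           (\<forall>j\<in>C. \<forall>i. i \<in> I \<longrightarrow> (transpose M *v alpha j) $ i = 0)))"

definition hyps_containing :: "nat \<Rightarrow> (nat \<Rightarrow> complex^'n) \<Rightarrow> (complex^'n) set \<Rightarrow> nat set" where
  "hyps_containing m alpha X = {j. j < m \<and> X \<subseteq> hyp (alpha j)}"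

definition dense_edge :: "nat \<Rightarrow> (nat \<Rightarrow> complex^'n) \<Rightarrow> (complex^'n) set \<Rightarrow> bool" where
  "dense_edge m alpha X \<longleftrightarrow> is_edge m alpha X \<and> \<not> reducible alpha (hyps_containing m alpha X)"

definition eigenvalue :: "complex^'r^'r \<Rightarrow> complex \<Rightarrow> bool" where
  "eigenvalue A c \<longleftrightarrow> (\<exists>v. v \<noteq> 0 \<and> A *v v = c *s v)"

definition PX :: "nat \<Rightarrow> (nat \<Rightarrow> complex^'n) \<Rightarrow> (nat \<Rightarrow> complex^'r^'r) \<Rightarrow> (complex^'n) set \<Rightarrow> complex^'r^'r" where
  "PX m alpha P X = (\<Sum>j\<in>hyps_containing m alpha X. P j)"

end

theory Submission
  imports Defs
begin

lemma ofint_vec: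
  fixes k :: int and i :: "'r::finite"
  shows "(of_int k :: 'a::ring_1^'r) $ i = of_int k"
proof -
  have nat: "(of_nat n :: 'a::ring_1^'r) $ i = of_nat n" for n
    by (induct n) simp_all
  show ?thesis
  proof (cases k rule: int_cases)
    case (nonneg n) then show ?thesis using nat[of n] by simp
  next
    case (neg n) then show ?thesis using nat[of "Suc n"] by (simp del: of_nat_Suc)
  qed
qed

lemma shift_entry:
  "((A::complex^'r^'r) + of_int k *s mat 1) $ a $ b = A $ a $ b + (if a = b then of_int k else 0)"
  by (simp add: vector_scalar_mult_def mat_def ofint_vec if_distrib cong: if_cong)

lemma sum_shift:
  fixes P :: "nat \<Rightarrow> complex^'r^'r"
  shows "(\<Sum>j\<in>S. P j + of_int (k j) *s mat 1) = (\<Sum>j\<in>S. P j) + of_int (\<Sum>j\<in>S. k j) *s mat 1"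
proof -
  have "\<And>a b. (\<Sum>j\<in>S. P j + of_int (k j) *s mat 1) $ a $ b
      = ((\<Sum>j\<in>S. P j) + of_int (\<Sum>j\<in>S. k j) *s mat 1) $ a $ b"
  proof -
    fix a b
    have "(\<Sum>j\<in>S. P j + of_int (k j) *s mat 1) $ a $ b
        = (\<Sum>j\<in>S. P j $ a $ b + (if a = b then of_int (k j) else 0))"
      by (simp only: sum_component shift_entry)
    also have "\<dots> = (\<Sum>j\<in>S. P j $ a $ b) + (if a = b then of_int (\<Sum>j\<in>S. k j) else 0)"
      by (cases "a = b") (simp_all add: sum.distrib)
    also have "\<dots> = ((\<Sum>j\<in>S. P j) + of_int (\<Sum>j\<in>S. k j) *s mat 1) $ a $ b"
      by (simp only: sum_component shift_entry)
    finally show "?thesis a b" .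
  qed
  then show ?thesis by (simp add: vec_eq_iff)
qed

lemma eig_shift:
  fixes A :: "complex^'r^'r"
  assumes "eigenvalue (A + of_int s *s mat 1) c"
  shows "eigenvalue A (c - of_int s)"
proof -
  obtain v where v: "v \<noteq> 0" "(A + of_int s *s mat 1) *v v = c *s v"
    using assms unfolding eigenvalue_def by blast
  have "A *v v = (c - of_int s) *s v"
  proof (subst vec_eq_iff, intro allI)
    fix a
    have "((A + of_int s *s mat 1) *v v) $ a = (\<Sum>b\<in>UNIV. (A $ a $ b + (if a = b then of_int s else 0)) * v $ b)"
      by (simp only: matrix_vector_mult_def vec_lambda_beta shift_entry)
    also have "\<dots> = (\<Sum>b\<in>UNIV. A $ a $ b * v $ b) + (\<Sum>b\<in>UNIV. (if a = b then of_int s else 0) * v $ b)"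
      by (simp only: distrib_right sum.distrib)
    also have "(\<Sum>b\<in>UNIV. (if a = b then of_int s else 0) * v $ b) = (\<Sum>b\<in>UNIV. if a = b then of_int s * v $ b else 0)"
      by (intro sum.cong) auto
    also have "\<dots> = of_int s * v $ a" by simp
    finally have "((A + of_int s *s mat 1) *v v) $ a = (A *v v) $ a + of_int s * v $ a"
      by (simp only: matrix_vector_mult_def vec_lambda_beta)
    then have "(A *v v) $ a + of_int s * v $ a = c * v $ a"
      using v(2) by (metis vector_scalar_mult_def vec_lambda_beta)
    then show "(A *v v) $ a = ((c - of_int s) *s v) $ a"
      by (simp add: algebra_simps)
  qed
  then show ?thesis unfolding eigenvalue_def using v(1) by blast
qed

lemma eig_bound:
  fixes A :: "complex^'r^'r"
  assumes "eigenvalue A c"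
  shows "cmod c \<le> (\<Sum>a\<in>UNIV. \<Sum>b\<in>UNIV. cmod (A $ a $ b))"
proof -
  obtain v where v: "v \<noteq> 0" "A *v v = c *s v"
    using assms unfolding eigenvalue_def by blast
  have "Max (range (\<lambda>i. cmod (v $ i))) \<in> range (\<lambda>i. cmod (v $ i))"
    by (rule Max_in) auto
  then obtain a where aM': "Max (range (\<lambda>i. cmod (v $ i))) = cmod (v $ a)" by (rule imageE)
  note aM = aM'[symmetric]
  have a: "\<And>i. cmod (v $ i) \<le> cmod (v $ a)"
    unfolding aM by (rule Max_ge) auto
  obtain i where "v $ i \<noteq> 0" using v(1) by (auto simp: vec_eq_iff)
  then have pos: "cmod (v $ a) > 0" using a[of i] by auto
  have "(A *v v) $ a = (c *s v) $ a" using v(2) by simp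
  then have "c * v $ a = (\<Sum>b\<in>UNIV. A $ a $ b * v $ b)"
    by (simp only: matrix_vector_mult_def vector_scalar_mult_def vec_lambda_beta)
  then have "cmod c * cmod (v $ a) = cmod (\<Sum>b\<in>UNIV. A $ a $ b * v $ b)"
    by (simp only: norm_mult[symmetric])
  also have "\<dots> \<le> (\<Sum>b\<in>UNIV. cmod (A $ a $ b) * cmod (v $ b))"
    by (rule order_trans[OF norm_sum]) (simp add: norm_mult)
  also have "\<dots> \<le> (\<Sum>b\<in>UNIV. cmod (A $ a $ b) * cmod (v $ a))"
    by (intro sum_mono mult_left_mono a) simp
  also have "\<dots> = (\<Sum>b\<in>UNIV. cmod (A $ a $ b)) * cmod (v $ a)"
    by (simp add: sum_distrib_right)
  finally have "cmod c * cmod (v $ a) \<le> (\<Sum>b\<in>UNIV. cmod (A $ a $ b)) * cmod (v $ a)" .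
  then have "cmod c \<le> (\<Sum>b\<in>UNIV. cmod (A $ a $ b))"
    using pos by (rule mult_right_le_imp_le)
  also have "\<dots> \<le> (\<Sum>a\<in>UNIV. \<Sum>b\<in>UNIV. cmod (A $ a $ b))"
    by (rule member_le_sum) (auto intro: sum_nonneg)
  finally show ?thesis .
qed

lemma entry_bound:
  fixes P :: "nat \<Rightarrow> complex^'r^'r"
  assumes "S \<subseteq> {..<m}"
  shows "(\<Sum>a\<in>UNIV. \<Sum>b\<in>UNIV. cmod ((\<Sum>j\<in>S. P j) $ a $ b))
     \<le> (\<Sum>j<m. \<Sum>a\<in>UNIV. \<Sum>b\<in>UNIV. cmod (P j $ a $ b))"
proof -
  have fin: "finite S" using assms finite_subset by blast
  have "(\<Sum>a\<in>UNIV. \<Sum>b\<in>UNIV. cmod ((\<Sum>j\<in>S. P j) $ a $ b))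
      \<le> (\<Sum>a\<in>UNIV. \<Sum>b\<in>UNIV. \<Sum>j\<in>S. cmod (P j $ a $ b))"
    by (intro sum_mono) (simp add: norm_sum)
  also have "\<dots> = (\<Sum>a\<in>UNIV. \<Sum>j\<in>S. \<Sum>b\<in>UNIV. cmod (P j $ a $ b))"
    by (intro sum.cong refl) (rule sum.swap)
  also have "\<dots> = (\<Sum>j\<in>S. \<Sum>a\<in>UNIV. \<Sum>b\<in>UNIV. cmod (P j $ a $ b))"
    by (rule sum.swap)
  also have "\<dots> \<le> (\<Sum>j<m. \<Sum>a\<in>UNIV. \<Sum>b\<in>UNIV. cmod (P j $ a $ b))"
    by (rule sum_mono2) (auto simp: assms intro!: sum_nonneg)
  finally show ?thesis .
qed

theorem proposition4p1:
  fixes m :: nat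
    and alpha :: "nat \<Rightarrow> complex^'n"
    and P :: "nat \<Rightarrow> complex^'r^'r"
  assumes arr: "arrangement m alpha"
    and sum0: "(\<Sum>j<m. P j) = 0"
    and comm: "\<And>j X. j < m \<Longrightarrow> is_edge m alpha X \<Longrightarrow> codim X = 2 \<Longrightarrow> X \<subseteq> hyp (alpha j) \<Longrightarrow>
                 P j ** PX m alpha P X = PX m alpha P X ** P j"
    and nonres: "\<exists>h<m. \<forall>X. dense_edge m alpha X \<and> X \<subseteq> hyp (alpha h) \<longrightarrow>
                 (\<forall>c. eigenvalue (PX m alpha P X) c \<longrightarrow> c \<notin> \<int>)"
  shows "\<exists>k :: nat \<Rightarrow> int. (\<Sum>j<m. k j) = 0 \<and>
           (\<forall>X. dense_edge m alpha X \<longrightarrow>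
              (\<forall>c. eigenvalue (PX m alpha (\<lambda>j. P j + of_int (k j) *s mat 1) X) c \<longrightarrow>
                   c \<notin> {of_nat q | q :: nat. True}))"
proof -
  obtain h where h: "h < m" and hres: "\<And>X c. dense_edge m alpha X \<Longrightarrow> X \<subseteq> hyp (alpha h) \<Longrightarrow>
      eigenvalue (PX m alpha P X) c \<Longrightarrow> c \<notin> \<int>"
    using nonres by blast
  define B where "B = (\<Sum>j<m. \<Sum>a\<in>UNIV. \<Sum>b\<in>UNIV. cmod (P j $ a $ b))"
  define N :: int where "N = ceiling B + 1"
  have NB: "real_of_int N > B" unfolding N_def by linarith
  have B0: "B \<ge> 0" unfolding B_def by (intro sum_nonneg) auto
  define k :: "nat \<Rightarrow> int" where "k j = (if j = h then int (m - 1) * N else - N)" for j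
  have "(\<Sum>j<m. k j) = k h + (\<Sum>j\<in>{..<m} - {h}. k j)"
    using h by (simp add: sum.remove)
  also have "(\<Sum>j\<in>{..<m} - {h}. k j) = (\<Sum>j\<in>{..<m} - {h}. - N)"
    by (rule sum.cong) (auto simp: k_def)
  also have "\<dots> = - (int (m - 1) * N)" using h by simp
  finally have ksum: "(\<Sum>j<m. k j) = 0" by (simp add: k_def)
  have main: "c \<notin> {of_nat q | q :: nat. True}"
    if dX: "dense_edge m alpha X" and ev: "eigenvalue (PX m alpha (\<lambda>j. P j + of_int (k j) *s mat 1) X) c"
    for X c
  proof
    assume "c \<in> {of_nat q | q :: nat. True}"
    then obtain q :: nat where cq: "c = of_nat q" by blast
    define S where "S = hyps_containing m alpha X"
    define K where "K = (\<Sum>j\<in>S. k j)"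
    have Ssub: "S \<subseteq> {..<m}" unfolding S_def hyps_containing_def by auto
    have finS: "finite S" using Ssub finite_subset by blast
    have "PX m alpha (\<lambda>j. P j + of_int (k j) *s mat 1) X = PX m alpha P X + of_int K *s mat 1"
      unfolding PX_def K_def S_def by (rule sum_shift)
    with ev have ev2: "eigenvalue (PX m alpha P X) (c - of_int K)"
      using eig_shift by metis
    show False
    proof (cases "X \<subseteq> hyp (alpha h)")
      case True
      have "c - of_int K \<in> \<int>" using cq by simp
      then show False using hres[OF dX True ev2] by blast
    next
      case False
      then have hS: "h \<notin> S" unfolding S_def hyps_containing_def by auto
      obtain S0 where S0: "S0 \<subseteq> {..<m}" "S0 \<noteq> {}" "X = (\<Inter>j\<in>S0. hyp (alpha j))"
        using dX unfolding dense_edge_def is_edge_def by blast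
      have "S0 \<subseteq> S" using S0 unfolding S_def hyps_containing_def by auto
      then have "S \<noteq> {}" using S0(2) by auto
      then have cardS: "card S \<ge> 1" using finS by (simp add: Suc_le_eq card_gt_0_iff)
      have "K = (\<Sum>j\<in>S. - N)" unfolding K_def using hS by (intro sum.cong) (auto simp: k_def)
      then have KN: "K = - int (card S) * N" by simp
      have "cmod (c - of_int K) \<le> B"
        using eig_bound[OF ev2] entry_bound[OF Ssub, of P] unfolding PX_def S_def B_def by simp
      moreover have "Re (c - of_int K) = real q + real (card S) * real_of_int N"
        using cq KN by simp
      moreover have "real (card S) * real_of_int N \<ge> real_of_int N"
        using cardS NB B0 by simp
      ultimately show False using complex_Re_le_cmod[of "c - of_int K"] NB by linarith
    qed
  qed
  show ?thesis using ksum main by blast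
qed

end
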